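(* Define real sequences by the Gauss–Legendre iteration: $a_0 = 1$, $b_0 = 1/\sqrt{2}$, $s_0 = \tfrac14$, and for $n \ge 0$ \[ a_{n+1} = \frac{a_n+b_n}{2},\quad b_{n+1} = \sqrt{a_n b_n},\quad c_{n+1} = a_n - a_{n+1},\quad s_{n+1} = s_n - 2^n c_{n+1}^2 . \] Define also sequences by the Borwein iteration: $\alpha_0 = 6-4\sqrt{2}$, $k_0 = 3-2\sqrt{2}$, and for $n\ge 0$ \[ k_n' = \sqrt{1-k_n^2},\quad k_{n+1} = \frac{1-k_n'}{1+k_n'},\quad \alpha_{n+1} = (1+k_{n+1})^2\alpha_n - 2^{n+2}k_{n+1}, \] and set $\widehat{\pi}_n = 1/\alpha_n$. Then for every $n \ge 0$, \[ \widehat{\pi}_n = \frac{a_{n+1}^2}{s_n}. \]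
   Context: All square roots are the positive real square roots; all quantities are computed in exact real arithmetic. *)

theory Defs
  imports Complex_Main
begin

fun gl_ab :: "nat \<Rightarrow> real \<times> real" where
  "gl_ab 0 = (1, 1 / sqrt 2)"
| "gl_ab (Suc n) = (let (a, b) = gl_ab n in ((a + b) / 2, sqrt (a * b)))"

definition gl_a :: "nat \<Rightarrow> real" where "gl_a n = fst (gl_ab n)"
definition gl_b :: "nat \<Rightarrow> real" where "gl_b n = snd (gl_ab n)"

text \<open>c (n+1) = a n - a (n+1); c 0 is not used.\<close>
definition gl_c :: "nat \<Rightarrow> real" where "gl_c n = gl_a (n - 1) - gl_a n"

fun gl_s :: "nat \<Rightarrow> real" where
  "gl_s 0 = 1 / 4"
| "gl_s (Suc n) = gl_s n - 2 ^ n * (gl_c (Suc n))\<^sup>2"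

fun bw_k :: "nat \<Rightarrow> real" where
  "bw_k 0 = 3 - 2 * sqrt 2"
| "bw_k (Suc n) = (1 - sqrt (1 - (bw_k n)\<^sup>2)) / (1 + sqrt (1 - (bw_k n)\<^sup>2))"

definition bw_k' :: "nat \<Rightarrow> real" where "bw_k' n = sqrt (1 - (bw_k n)\<^sup>2)"

fun bw_alpha :: "nat \<Rightarrow> real" where
  "bw_alpha 0 = 6 - 4 * sqrt 2"
| "bw_alpha (Suc n) = (1 + bw_k (Suc n))\<^sup>2 * bw_alpha n - 2 ^ (n + 2) * bw_k (Suc n)"

definition bw_pi :: "nat \<Rightarrow> real" where "bw_pi n = 1 / bw_alpha n"

end

theory Submission
  imports Defs
begin

lemma a_Suc: "gl_a (Suc n) = (gl_a n + gl_b n) / 2"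
  by (simp add: gl_a_def gl_b_def split: prod.splits)

lemma b_Suc: "gl_b (Suc n) = sqrt (gl_a n * gl_b n)"
  by (simp add: gl_a_def gl_b_def split: prod.splits)

lemma ab_pos: "gl_a n > 0 \<and> gl_b n > 0"
proof (induction n)
  case 0 then show ?case by (simp add: gl_a_def gl_b_def)
next
  case (Suc n) then show ?case by (simp add: a_Suc b_Suc)
qed

lemma sqrt_lem:
  fixes a b :: real assumes "a > 0" "b > 0"
  shows "sqrt (1 - ((a - b) / (a + b))\<^sup>2) = 2 * sqrt (a * b) / (a + b)"
proof -
  have "1 - ((a - b) / (a + b))\<^sup>2 = (2 * sqrt (a * b) / (a + b))\<^sup>2"
  proof -
    have ne: "a + b \<noteq> 0" using assms by simp
    have "1 - ((a - b) / (a + b))\<^sup>2 = ((a+b)\<^sup>2 - (a-b)\<^sup>2) / (a+b)\<^sup>2"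
      using ne by (simp add: field_simps)
    also have "\<dots> = 4 * (a*b) / (a+b)\<^sup>2" by (simp add: power2_eq_square algebra_simps)
    also have "\<dots> = (2 * sqrt (a * b) / (a + b))\<^sup>2"
      using assms by (simp add: power_divide power_mult_distrib)
    finally show ?thesis .
  qed
  moreover have "2 * sqrt (a * b) / (a + b) \<ge> 0" using assms by simp
  ultimately show ?thesis using real_sqrt_abs abs_of_nonneg by metis
qed

lemma hl: fixes s x :: real assumes "s > 0"
  shows "(1 - x/s)/(1 + x/s) = (s-x)/(s+x)"
proof -
  have "1 - x/s = (s-x)/s" "1+x/s = (s+x)/s" using assms by (simp_all add: field_simps)
  then show ?thesis using assms by simp
qed

lemma hl2: fixes s y :: real
  shows "(s/2 - y)/(s/2 + y) = (s - 2*y)/(s + 2*y)"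
proof -
  have e: "s/2 - y = (s - 2*y)/2" "s/2 + y = (s + 2*y)/2" by simp_all
  have hr: "\<And>u v::real. (u/2)/(v/2) = u/v" by simp
  show ?thesis by (simp only: e hr)
qed

lemma k_eq: "bw_k n = (gl_a n - gl_b n) / (gl_a n + gl_b n)"
proof (induction n)
  case 0
  have r: "sqrt 2 * sqrt 2 = 2" by simp
  have h: "1 / sqrt 2 = sqrt 2 / 2" by (simp add: field_simps)
  have e: "1 - 1 / sqrt 2 = (3 - 2 * sqrt 2) * (1 + 1 / sqrt 2)"
    unfolding h using r by (simp add: algebra_simps)
  have q: "1 / sqrt 2 > 0" by simp
  have pos: "1 + 1 / sqrt 2 \<noteq> 0" using q by linarith
  have "(1 - 1 / sqrt 2) / (1 + 1 / sqrt 2) = 3 - 2 * sqrt 2"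
    using pos by (subst e) simp
  then show ?case by (simp add: gl_a_def gl_b_def)
next
  case (Suc n)
  define a where "a = gl_a n"
  define b where "b = gl_b n"
  have p: "a > 0" "b > 0" using ab_pos a_def b_def by auto
  have s: "sqrt (1 - (bw_k n)\<^sup>2) = 2 * sqrt (a * b) / (a + b)"
    using Suc sqrt_lem[OF p] by (simp add: a_def b_def)
  have q: "sqrt (a * b) > 0" using p by simp
  have "bw_k (Suc n) = (1 - 2 * sqrt (a * b) / (a + b)) / (1 + 2 * sqrt (a * b) / (a + b))"
    using s by simp
  also have "\<dots> = ((a + b)/2 - sqrt (a*b)) / ((a+b)/2 + sqrt (a*b))"
    using p by (simp add: hl hl2)
  finally show ?case by (simp add: a_Suc b_Suc a_def b_def)
qed

lemma c_rel: "(gl_c (Suc n))\<^sup>2 = 4 * gl_c (Suc (Suc n)) * gl_a (Suc (Suc n))"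
proof -
  define a where "a = gl_a n"
  define b where "b = gl_b n"
  define A where "A = gl_a (Suc n)"
  define B where "B = gl_b (Suc n)"
  have p: "a > 0" "b > 0" using ab_pos a_def b_def by auto
  have Ae: "A = (a+b)/2" by (simp add: A_def a_def b_def a_Suc)
  have Be: "B\<^sup>2 = a * b" using p by (simp add: B_def a_def b_def b_Suc)
  have c1: "gl_c (Suc n) = (a - b)/2" by (simp add: gl_c_def a_def b_def a_Suc field_simps)
  have c2: "gl_c (Suc (Suc n)) = (A - B)/2" by (simp add: gl_c_def A_def B_def a_Suc[of "Suc n"] field_simps)
  have a2: "gl_a (Suc (Suc n)) = (A + B)/2" by (simp add: A_def B_def a_Suc)
  have "4 * gl_c (Suc (Suc n)) * gl_a (Suc (Suc n)) = A\<^sup>2 - B\<^sup>2"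
  proof -
    have "4 * ((A - B)/2) * ((A + B)/2) = (A - B) * (A + B)" by simp
    also have "\<dots> = A\<^sup>2 - B\<^sup>2" by (simp add: power2_eq_square algebra_simps)
    finally show ?thesis unfolding c2 a2 .
  qed
  also have "\<dots> = ((a - b)/2)\<^sup>2" unfolding Ae Be by (simp add: power2_eq_square field_simps)
  finally have fin: "4 * gl_c (Suc (Suc n)) * gl_a (Suc (Suc n)) = ((a - b)/2)\<^sup>2" .
  show ?thesis by (subst c1) (rule sym[OF fin])
qed

lemma alpha_eq: "bw_alpha n = gl_s n / (gl_a (Suc n))\<^sup>2"
proof (induction n)
  case 0
  have r: "sqrt 2 * sqrt 2 = 2" by simp
  have h: "1 / sqrt 2 = sqrt 2 / 2" by (simp add: field_simps)
  have a1: "gl_a 1 = (2 + sqrt 2) / 4"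
    by (simp add: a_Suc[of 0, simplified] gl_a_def gl_b_def h)
  have sq: "(gl_a 1)\<^sup>2 = (6 + 4 * sqrt 2) / 16"
    unfolding a1 power2_eq_square using r by (simp add: algebra_simps)
  have q: "sqrt 2 > 0" by simp
  have pos: "6 + 4 * sqrt 2 \<noteq> 0" using q by linarith
  have e: "(6 - 4 * sqrt 2) * (6 + 4 * sqrt 2) = 4" using r by (simp add: algebra_simps)
  have "gl_s 0 / (gl_a 1)\<^sup>2 = 4 / (6 + 4 * sqrt 2)" unfolding sq by simp
  also have "\<dots> = 6 - 4 * sqrt 2" using pos e by (simp add: divide_eq_eq)
  finally show ?case by simp
next
  case (Suc n)
  define a1 where "a1 = gl_a (Suc n)"
  define b1 where "b1 = gl_b (Suc n)"
  define a2 where "a2 = gl_a (Suc (Suc n))"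
  define S where "S = gl_s n"
  have p: "a1 > 0" "b1 > 0" using ab_pos a1_def b1_def by auto
  have a2e: "a2 = (a1 + b1)/2" by (simp add: a2_def a1_def b1_def a_Suc[of "Suc n"])
  have a2p: "a2 > 0" using p a2e by simp
  have k: "bw_k (Suc n) = (a1 - a2)/a2"
    unfolding k_eq a1_def[symmetric] b1_def[symmetric] a2e using p by (simp add: field_simps)
  have k1: "1 + bw_k (Suc n) = a1 / a2" unfolding k using a2p by (simp add: field_simps)
  have c2: "gl_c (Suc (Suc n)) = a1 - a2" by (simp add: gl_c_def a1_def a2_def)
  have cr: "(gl_c (Suc n))\<^sup>2 = 4 * (a1 - a2) * a2" using c_rel[of n] c2 a2_def by simp
  have "bw_alpha (Suc n) = (a1 / a2)\<^sup>2 * (S / a1\<^sup>2) - 2 ^ n * 4 * ((a1 - a2)/a2)"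
    using Suc k k1 by (simp add: a1_def S_def)
  also have "\<dots> = (S - 2 ^ n * (4 * (a1 - a2) * a2)) / a2\<^sup>2"
    using p a2p by (simp add: field_simps power2_eq_square)
  also have "\<dots> = gl_s (Suc n) / a2\<^sup>2" using cr by (simp add: S_def)
  finally show ?case by (simp add: a2_def)
qed

theorem theorem1:
  fixes n :: nat
  shows "bw_pi n = (gl_a (Suc n))\<^sup>2 / gl_s n"
  by (simp add: bw_pi_def alpha_eq)

end
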